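(* Let $G$ be a localic group and $X$ a set, and let $\widehat{\mu}:G\to Rel(X)$ be a morphism of localic monoids. Then there exists a unique action of $G$ on $X$, i.e. a morphism of localic groups $\widehat{\mu}:G\to Aut(X)$, whose composite with $Aut(X)\to Rel(X)$ is the given morphism; equivalently the corresponding locale map $Rel(X)\to\mathcal{O}(G)$ factors (uniquely) through $Rel(X)\to Aut(X)$ via a Hopf algebra morphism.
   Context: Localic groups/monoids are group/monoid objects in $Loc^{op}$, i.e. Hopf algebras/bialgebras in sup-lattices whose underlying algebra is a locale (comultiplication $w$, counit $e$, antipode $\iota$). For a set $X$, $Rel(X)$ is the free locale on $X\times X$ (generators $\langle x|y\rangle$), a localic monoid with $w\langle x|y\rangle=\bigvee_z\langle x|z\rangle\otimes\langle z|y\rangle$ and $e\langle x|y\rangle=\delta_{x=y}$. $Aut(X)$ is the quotient of $Rel(X)$ forcing $X\times X\to Aut(X)$ to be an $\ell$-bijection ($\bigvee_y\langle x|y\rangle=1$, $\langle x|y_1\rangle\wedge\langle x|y_2\rangle=0$ for $y_1\ne y_2$, and the two symmetric conditions); it is a localic group with the same $w,e$ and antipode $\iota\langle x|y\rangle=\langle y|x\rangle$. An action of $G$ on $X$ is a localic group morphism $G\to Aut(X)$, i.e. a Hopf algebra morphism $Aut(X)\to\mathcal{O}(G)$. *)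

theory Defs
  imports Main
begin

unbundle lattice_syntax

definition frame_law :: "'a::complete_lattice itself \<Rightarrow> bool" where
  "frame_law _ \<longleftrightarrow> (\<forall>(a::'a) S. a \<sqinter> Sup S = Sup ((\<lambda>s. a \<sqinter> s) ` S))"

definition frame_hom :: "('a::complete_lattice \<Rightarrow> 'b::complete_lattice) \<Rightarrow> bool" where
  "frame_hom f \<longleftrightarrow> f top = top \<and> (\<forall>a b. f (a \<sqinter> b) = f a \<sqinter> f b)
      \<and> (\<forall>S. f (Sup S) = Sup (f ` S))"

text \<open>The frame A \<otimes> B (coproduct of frames, i.e. the frame of the product locale) is
  realised as the set of C-ideals of A \<times> B: down-closed subsets closed under joins in
  each coordinate separately (empty joins give (0,b) and (a,0)), ordered by inclusion.\<close>
definition cideal :: "('a::complete_lattice \<times> 'b::complete_lattice) set \<Rightarrow> bool" where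
  "cideal D \<longleftrightarrow>
     (\<forall>a b a' b'. (a, b) \<in> D \<and> a' \<le> a \<and> b' \<le> b \<longrightarrow> (a', b') \<in> D)
   \<and> (\<forall>S b. (\<forall>s\<in>S. (s, b) \<in> D) \<longrightarrow> (Sup S, b) \<in> D)
   \<and> (\<forall>a S. (\<forall>s\<in>S. (a, s) \<in> D) \<longrightarrow> (a, Sup S) \<in> D)"

definition cgen :: "('a::complete_lattice \<times> 'b::complete_lattice) set \<Rightarrow> ('a \<times> 'b) set" where
  "cgen R = \<Inter> {D. cideal D \<and> R \<subseteq> D}"

text \<open>Elementary tensor a \<otimes> b and joins in A \<otimes> B (meets are intersections).\<close>
definition tens :: "'a::complete_lattice \<Rightarrow> 'b::complete_lattice \<Rightarrow> ('a \<times> 'b) set" where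
  "tens a b = cgen {(a, b)}"

definition tsup :: "('a::complete_lattice \<times> 'b::complete_lattice) set set \<Rightarrow> ('a \<times> 'b) set" where
  "tsup Ds = cgen (\<Union> Ds)"

definition cideal3 :: "('a::complete_lattice \<times> 'a \<times> 'a) set \<Rightarrow> bool" where
  "cideal3 D \<longleftrightarrow>
     (\<forall>a b c a' b' c'. (a, b, c) \<in> D \<and> a' \<le> a \<and> b' \<le> b \<and> c' \<le> c \<longrightarrow> (a', b', c') \<in> D)
   \<and> (\<forall>S b c. (\<forall>s\<in>S. (s, b, c) \<in> D) \<longrightarrow> (Sup S, b, c) \<in> D)
   \<and> (\<forall>a S c. (\<forall>s\<in>S. (a, s, c) \<in> D) \<longrightarrow> (a, Sup S, c) \<in> D)
   \<and> (\<forall>a b S. (\<forall>s\<in>S. (a, b, s) \<in> D) \<longrightarrow> (a, b, Sup S) \<in> D)"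

definition cgen3 :: "('a::complete_lattice \<times> 'a \<times> 'a) set \<Rightarrow> ('a \<times> 'a \<times> 'a) set" where
  "cgen3 R = \<Inter> {D. cideal3 D \<and> R \<subseteq> D}"

definition comult_hom :: "('a::complete_lattice \<Rightarrow> ('a \<times> 'a) set) \<Rightarrow> bool" where
  "comult_hom w \<longleftrightarrow> (\<forall>a. cideal (w a)) \<and> w top = tens top top
     \<and> (\<forall>a b. w (a \<sqinter> b) = w a \<inter> w b) \<and> (\<forall>S. w (Sup S) = tsup (w ` S))"

text \<open>A localic group: a frame O(G) (the type 'a) with comultiplication w (the frame map of
  the multiplication G \<times> G \<rightarrow> G), counit e : O(G) \<rightarrow> \<Omega> = bool (the frame map of the
  unit point 1 \<rightarrow> G) and antipode i (the frame map of the inversion G \<rightarrow> G), satisfying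
  the group-object axioms in Loc.  Each axiom is the corresponding composite of frame
  maps, evaluated on w a = \<Squnion>{c \<otimes> b | (c,b) \<in> w a}:
  - coassociativity: (w \<otimes> id) \<circ> w = (id \<otimes> w) \<circ> w;
  - counit: (e \<otimes> id) \<circ> w = id = (id \<otimes> e) \<circ> w, using \<Omega> \<otimes> A = A;
  - antipode: \<nabla> \<circ> (i \<otimes> id) \<circ> w = (unit of \<Omega> \<rightarrow> A) \<circ> e = \<nabla> \<circ> (id \<otimes> i) \<circ> w,
    where \<nabla>(c \<otimes> b) = c \<sqinter> b is the frame map of the diagonal G \<rightarrow> G \<times> G.\<close>
definition localic_group ::
  "('a::complete_lattice \<Rightarrow> ('a \<times> 'a) set) \<Rightarrow> ('a \<Rightarrow> bool) \<Rightarrow> ('a \<Rightarrow> 'a) \<Rightarrow> bool" where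
  "localic_group w e i \<longleftrightarrow>
     frame_law TYPE('a) \<and> comult_hom w \<and> frame_hom e \<and> frame_hom i
   \<and> (\<forall>a. cgen3 {(x, y, c) | x y b c. (b, c) \<in> w a \<and> (x, y) \<in> w b}
          = cgen3 {(x, y, c) | x y b c. (x, b) \<in> w a \<and> (y, c) \<in> w b})
   \<and> (\<forall>a. Sup {b. \<exists>c. (c, b) \<in> w a \<and> e c} = a)
   \<and> (\<forall>a. Sup {c. \<exists>b. (c, b) \<in> w a \<and> e b} = a)
   \<and> (\<forall>a. Sup {i c \<sqinter> b | c b. (c, b) \<in> w a} = (if e a then top else bot))
   \<and> (\<forall>a. Sup {c \<sqinter> i b | c b. (c, b) \<in> w a} = (if e a then top else bot))"

text \<open>Rel(X) is the free frame on the generators \<langle>x|y\<rangle>, (x,y) \<in> X \<times> X, so a frame map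
  Rel(X) \<rightarrow> O(G) is the same as an assignment f of the generators.  It is a morphism of
  localic monoids G \<rightarrow> Rel(X) (a bialgebra morphism) iff it commutes with comultiplication
  and counit, which (both sides being frame maps out of Rel(X)) may be checked on generators:
  w (f(x,y)) = join over z of f(x,z) \<otimes> f(z,y)  and  e (f(x,y)) = delta(x,y).\<close>
definition rel_monoid_morphism ::
  "'x set \<Rightarrow> ('a::complete_lattice \<Rightarrow> ('a \<times> 'a) set) \<Rightarrow> ('a \<Rightarrow> bool) \<Rightarrow> ('x \<times> 'x \<Rightarrow> 'a) \<Rightarrow> bool" where
  "rel_monoid_morphism X w e f \<longleftrightarrow>
     (\<forall>x\<in>X. \<forall>y\<in>X. w (f (x, y)) = tsup ((\<lambda>z. tens (f (x, z)) (f (z, y))) ` X))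
   \<and> (\<forall>x\<in>X. \<forall>y\<in>X. e (f (x, y)) = (x = y))"

text \<open>Aut(X) is the quotient of Rel(X) by the \<ell>-bijection relations, so a frame map
  Aut(X) \<rightarrow> O(G) is the same as an assignment g of the generators satisfying these
  relations in O(G).\<close>
definition l_bijection :: "'x set \<Rightarrow> ('x \<times> 'x \<Rightarrow> 'a::complete_lattice) \<Rightarrow> bool" where
  "l_bijection X g \<longleftrightarrow>
     (\<forall>x\<in>X. Sup ((\<lambda>y. g (x, y)) ` X) = top)
   \<and> (\<forall>x\<in>X. \<forall>y1\<in>X. \<forall>y2\<in>X. y1 \<noteq> y2 \<longrightarrow> g (x, y1) \<sqinter> g (x, y2) = bot)
   \<and> (\<forall>y\<in>X. Sup ((\<lambda>x. g (x, y)) ` X) = top)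
   \<and> (\<forall>y\<in>X. \<forall>x1\<in>X. \<forall>x2\<in>X. x1 \<noteq> x2 \<longrightarrow> g (x1, y) \<sqinter> g (x2, y) = bot)"

text \<open>A morphism of localic groups G \<rightarrow> Aut(X) (Hopf algebra morphism Aut(X) \<rightarrow> O(G)):
  a frame map out of Aut(X) commuting with comultiplication, counit and antipode
  (\<iota>\<langle>x|y\<rangle> = \<langle>y|x\<rangle>), again checked on generators.\<close>
definition aut_group_morphism ::
  "'x set \<Rightarrow> ('a::complete_lattice \<Rightarrow> ('a \<times> 'a) set) \<Rightarrow> ('a \<Rightarrow> bool) \<Rightarrow> ('a \<Rightarrow> 'a)
     \<Rightarrow> ('x \<times> 'x \<Rightarrow> 'a) \<Rightarrow> bool" where
  "aut_group_morphism X w e i g \<longleftrightarrow>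
     l_bijection X g
   \<and> (\<forall>x\<in>X. \<forall>y\<in>X. w (g (x, y)) = tsup ((\<lambda>z. tens (g (x, z)) (g (z, y))) ` X))
   \<and> (\<forall>x\<in>X. \<forall>y\<in>X. e (g (x, y)) = (x = y))
   \<and> (\<forall>x\<in>X. \<forall>y\<in>X. i (g (x, y)) = g (y, x))"

end

theory Submission
  imports Defs
begin

lemma cgen_sub: "R \<subseteq> cgen R"
  unfolding cgen_def by blast

lemma cgen_bound:
  fixes \<phi> :: "'a::complete_lattice \<Rightarrow> 'b::complete_lattice \<Rightarrow> 'c::complete_lattice"
  assumes mono: "\<And>a b a' b'. a' \<le> a \<Longrightarrow> b' \<le> b \<Longrightarrow> \<phi> a' b' \<le> \<phi> a b"
    and s1: "\<And>S b. \<phi> (Sup S) b \<le> Sup ((\<lambda>s. \<phi> s b) ` S)"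
    and s2: "\<And>a S. \<phi> a (Sup S) \<le> Sup ((\<lambda>s. \<phi> a s) ` S)"
    and R: "\<And>c b. (c, b) \<in> R \<Longrightarrow> \<phi> c b \<le> M"
    and p: "(c, b) \<in> cgen R"
  shows "\<phi> c b \<le> M"
proof -
  let ?D = "{(c, b). \<phi> c b \<le> M}"
  have "cideal ?D"
    unfolding cideal_def
  proof (intro conjI allI impI)
    fix a b a' b' assume "(a, b) \<in> ?D \<and> a' \<le> a \<and> b' \<le> b"
    then show "(a', b') \<in> ?D" using mono order_trans by fastforce
  next
    fix S and b :: 'b assume h: "\<forall>s\<in>S. (s, b) \<in> ?D"
    have "Sup ((\<lambda>s. \<phi> s b) ` S) \<le> M" using h by (auto intro: SUP_least)
    then show "(Sup S, b) \<in> ?D" using s1[of S b] by auto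
  next
    fix a and S :: "'b set" assume h: "\<forall>s\<in>S. (a, s) \<in> ?D"
    have "Sup ((\<lambda>s. \<phi> a s) ` S) \<le> M" using h by (auto intro: SUP_least)
    then show "(a, Sup S) \<in> ?D" using s2[of a S] by auto
  qed
  moreover have "R \<subseteq> ?D" using R by auto
  ultimately have "cgen R \<subseteq> ?D" unfolding cgen_def by blast
  then show ?thesis using p by auto
qed

lemma sup_tens_bound:
  fixes \<phi> :: "'a::complete_lattice \<Rightarrow> 'a \<Rightarrow> 'c::complete_lattice"
  assumes mono: "\<And>a b a' b'. a' \<le> a \<Longrightarrow> b' \<le> b \<Longrightarrow> \<phi> a' b' \<le> \<phi> a b"
    and s1: "\<And>S b. \<phi> (Sup S) b \<le> Sup ((\<lambda>s. \<phi> s b) ` S)"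
    and s2: "\<And>a S. \<phi> a (Sup S) \<le> Sup ((\<lambda>s. \<phi> a s) ` S)"
  shows "Sup {\<phi> c b | c b. (c, b) \<in> tsup ((\<lambda>z. tens (g z) (h z)) ` X)}
         = Sup ((\<lambda>z. \<phi> (g z) (h z)) ` X)"
proof (rule antisym)
  have CB: "\<phi> c b \<le> M" if "\<And>c b. (c, b) \<in> R \<Longrightarrow> \<phi> c b \<le> M" "(c, b) \<in> cgen R" for R M c b
    apply (rule cgen_bound[where \<phi>=\<phi> and R=R])
      apply (erule (1) mono)
     apply (rule s1)
    apply (rule s2)
   apply (erule that(1))
  apply (rule that(2))
  done
  let ?M = "Sup ((\<lambda>z. \<phi> (g z) (h z)) ` X)"
  show "Sup {\<phi> c b | c b. (c, b) \<in> tsup ((\<lambda>z. tens (g z) (h z)) ` X)} \<le> ?M"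
  proof (rule Sup_least)
    fix t assume "t \<in> {\<phi> c b | c b. (c, b) \<in> tsup ((\<lambda>z. tens (g z) (h z)) ` X)}"
    then obtain c b where t: "t = \<phi> c b" and cb: "(c, b) \<in> tsup ((\<lambda>z. tens (g z) (h z)) ` X)"
      by auto
    have cb': "(c, b) \<in> cgen (\<Union> ((\<lambda>z. tens (g z) (h z)) ` X))"
      using cb unfolding tsup_def .
    have "\<phi> c b \<le> ?M"
    proof (rule CB[where R="\<Union> ((\<lambda>z. tens (g z) (h z)) ` X)"])
      fix c' b' assume "(c', b') \<in> \<Union> ((\<lambda>z. tens (g z) (h z)) ` X)"
      then obtain z where z: "z \<in> X" "(c', b') \<in> cgen {(g z, h z)}" unfolding tens_def by auto
      have zz: "\<phi> (g z) (h z) \<le> ?M" using z(1) by (auto intro: SUP_upper)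
      show "\<phi> c' b' \<le> ?M"
        by (rule CB[where R="{(g z, h z)}"]) (use zz z(2) in auto)
    qed (rule cb')
    then show "t \<le> ?M" using t by simp
  qed
next
  show "Sup ((\<lambda>z. \<phi> (g z) (h z)) ` X)
        \<le> Sup {\<phi> c b | c b. (c, b) \<in> tsup ((\<lambda>z. tens (g z) (h z)) ` X)}"
  proof (rule SUP_least)
    fix z assume z: "z \<in> X"
    have "(g z, h z) \<in> tens (g z) (h z)" unfolding tens_def
      by (rule subsetD[OF cgen_sub]) (rule singletonI)
    then have "(g z, h z) \<in> \<Union> ((\<lambda>z. tens (g z) (h z)) ` X)"
      using z by (rule UN_I[rotated])
    then have "(g z, h z) \<in> tsup ((\<lambda>z. tens (g z) (h z)) ` X)"
      unfolding tsup_def by (rule subsetD[OF cgen_sub])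
    then have "\<phi> (g z) (h z) \<in> {\<phi> c b | c b. (c, b) \<in> tsup ((\<lambda>z. tens (g z) (h z)) ` X)}"
      by blast
    then show "\<phi> (g z) (h z) \<le> Sup {\<phi> c b | c b. (c, b) \<in> tsup ((\<lambda>z. tens (g z) (h z)) ` X)}"
      by (rule Sup_upper)
  qed
qed

theorem mainTheorem10:
  fixes w :: "'a::complete_lattice \<Rightarrow> ('a \<times> 'a) set"
    and e :: "'a \<Rightarrow> bool" and i :: "'a \<Rightarrow> 'a"
    and X :: "'x set" and f :: "'x \<times> 'x \<Rightarrow> 'a"
  assumes "localic_group w e i"
    and "rel_monoid_morphism X w e f"
  shows "\<exists>g. aut_group_morphism X w e i g \<and> (\<forall>x\<in>X. \<forall>y\<in>X. g (x, y) = f (x, y))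
           \<and> (\<forall>g'. aut_group_morphism X w e i g' \<and> (\<forall>x\<in>X. \<forall>y\<in>X. g' (x, y) = f (x, y))
                  \<longrightarrow> (\<forall>x\<in>X. \<forall>y\<in>X. g' (x, y) = g (x, y)))"
proof -
  have fl: "\<And>(a::'a) S. a \<sqinter> Sup S = Sup ((\<lambda>s. a \<sqinter> s) ` S)"
    using assms(1) unfolding localic_group_def frame_law_def by blast
  have fl': "\<And>(a::'a) S. Sup S \<sqinter> a = Sup ((\<lambda>s. s \<sqinter> a) ` S)"
    by (metis (no_types, lifting) fl inf_commute SUP_cong)
  have ih: "frame_hom i" using assms(1) unfolding localic_group_def by blast
  have itop: "i top = top" and iinf: "\<And>a b. i (a \<sqinter> b) = i a \<sqinter> i b"
    and isup: "\<And>S. i (Sup S) = Sup (i ` S)" using ih unfolding frame_hom_def by auto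
  have imono: "\<And>a b. a \<le> b \<Longrightarrow> i a \<le> i b"
    by (metis iinf inf.absorb_iff1 inf.orderI)
  have ant1: "\<And>a. Sup {i c \<sqinter> b | c b. (c, b) \<in> w a} = (if e a then top else bot)"
    and ant2: "\<And>a. Sup {c \<sqinter> i b | c b. (c, b) \<in> w a} = (if e a then top else bot)"
    using assms(1) unfolding localic_group_def by blast+
  have wf: "\<And>x y. x \<in> X \<Longrightarrow> y \<in> X \<Longrightarrow> w (f (x, y)) = tsup ((\<lambda>z. tens (f (x, z)) (f (z, y))) ` X)"
    and ef: "\<And>x y. x \<in> X \<Longrightarrow> y \<in> X \<Longrightarrow> e (f (x, y)) = (x = y)"
    using assms(2) unfolding rel_monoid_morphism_def by auto
  have A: "Sup ((\<lambda>z. i (f (x, z)) \<sqinter> f (z, y)) ` X) = (if x = y then top else bot)"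
    if "x \<in> X" "y \<in> X" for x y
  proof -
    have eq2: "Sup {i c \<sqinter> b | c b. (c, b) \<in> tsup ((\<lambda>z. tens (f (x, z)) (f (z, y))) ` X)}
         = Sup ((\<lambda>z. i (f (x, z)) \<sqinter> f (z, y)) ` X)"
    proof (rule sup_tens_bound)
      show "\<And>a b a' b'. a' \<le> a \<Longrightarrow> b' \<le> b \<Longrightarrow> i a' \<sqinter> b' \<le> i a \<sqinter> b"
        using imono inf_mono by blast
      show "\<And>S b. i (Sup S) \<sqinter> b \<le> Sup ((\<lambda>s. i s \<sqinter> b) ` S)"
        by (simp add: isup fl' image_image)
      show "\<And>a S. i a \<sqinter> Sup S \<le> Sup ((\<lambda>s. i a \<sqinter> s) ` S)"
        by (simp add: fl)
    qed
    note eq = this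
    have eq2: "Sup {i c \<sqinter> b | c b. (c, b) \<in> tsup ((\<lambda>z. tens (f (x, z)) (f (z, y))) ` X)} = (if x = y then top else bot)"
      using ant1[of "f (x, y)"] unfolding wf[OF that] ef[OF that] .
    show ?thesis by (rule trans[OF sym[OF eq] eq2])
  qed
  have B: "Sup ((\<lambda>z. f (x, z) \<sqinter> i (f (z, y))) ` X) = (if x = y then top else bot)"
    if "x \<in> X" "y \<in> X" for x y
  proof -
    have eq2: "Sup {c \<sqinter> i b | c b. (c, b) \<in> tsup ((\<lambda>z. tens (f (x, z)) (f (z, y))) ` X)}
         = Sup ((\<lambda>z. f (x, z) \<sqinter> i (f (z, y))) ` X)"
    proof (rule sup_tens_bound)
      show "\<And>a b a' b'. a' \<le> a \<Longrightarrow> b' \<le> b \<Longrightarrow> a' \<sqinter> i b' \<le> a \<sqinter> i b"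
        using imono inf_mono by blast
      show "\<And>S b. Sup S \<sqinter> i b \<le> Sup ((\<lambda>s. s \<sqinter> i b) ` S)"
        by (simp add: fl')
      show "\<And>a S. a \<sqinter> i (Sup S) \<le> Sup ((\<lambda>s. a \<sqinter> i s) ` S)"
        by (simp add: fl isup image_image)
    qed
    note eq = this
    have eq2: "Sup {c \<sqinter> i b | c b. (c, b) \<in> tsup ((\<lambda>z. tens (f (x, z)) (f (z, y))) ` X)} = (if x = y then top else bot)"
      using ant2[of "f (x, y)"] unfolding wf[OF that] ef[OF that] .
    show ?thesis by (rule trans[OF sym[OF eq] eq2])
  qed
  have colsum: "Sup ((\<lambda>z. f (z, x)) ` X) = top" if "x \<in> X" for x
  proof -
    have "Sup ((\<lambda>z. i (f (x, z)) \<sqinter> f (z, x)) ` X) \<le> Sup ((\<lambda>z. f (z, x)) ` X)"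
      by (rule SUP_mono) (erule bexI[rotated], rule inf_le1 inf_le2)
    moreover have "Sup ((\<lambda>z. i (f (x, z)) \<sqinter> f (z, x)) ` X) = top"
      using A[OF that that] by (simp only: if_True simp_thms)
    ultimately show ?thesis by (metis top_le)
  qed
  have rowsum: "Sup ((\<lambda>z. f (x, z)) ` X) = top" if "x \<in> X" for x
  proof -
    have "Sup ((\<lambda>z. f (x, z) \<sqinter> i (f (z, x))) ` X) \<le> Sup ((\<lambda>z. f (x, z)) ` X)"
      by (rule SUP_mono) (erule bexI[rotated], rule inf_le1 inf_le2)
    moreover have "Sup ((\<lambda>z. f (x, z) \<sqinter> i (f (z, x))) ` X) = top"
      using B[OF that that] by (simp only: if_True simp_thms)
    ultimately show ?thesis by (metis top_le)
  qed
  have isum: "Sup ((\<lambda>x. i (f (x, z))) ` X) = top" if "z \<in> X" for z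
  proof -
    have "Sup ((\<lambda>x. i (f (x, z))) ` X) = i (Sup ((\<lambda>x. f (x, z)) ` X))"
      by (simp only: isup image_image)
    also have "\<dots> = top" using colsum[OF that] itop by (simp only:)
    finally show ?thesis .
  qed
  have le1: "f (z, y) \<le> i (f (y, z))" if "z \<in> X" "y \<in> X" for z y
  proof -
    have "f (z, y) = f (z, y) \<sqinter> Sup ((\<lambda>x. i (f (x, z))) ` X)" using isum[OF that(1)] by simp
    also have "\<dots> = Sup ((\<lambda>x. f (z, y) \<sqinter> i (f (x, z))) ` X)" by (simp add: fl image_image)
    also have "\<dots> \<le> i (f (y, z))"
    proof (rule SUP_least)
      fix x assume x: "x \<in> X"
      show "f (z, y) \<sqinter> i (f (x, z)) \<le> i (f (y, z))"
      proof (cases "x = y")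
        case False
        have "i (f (x, z)) \<sqinter> f (z, y) \<le> Sup ((\<lambda>z. i (f (x, z)) \<sqinter> f (z, y)) ` X)"
          using that x by (auto intro: SUP_upper)
        then have "i (f (x, z)) \<sqinter> f (z, y) = bot" using A[OF x that(2)] False by (simp add: bot_unique)
        then show ?thesis by (simp add: inf_commute)
      qed auto
    qed
    finally show ?thesis .
  qed
  have le2: "i (f (z, y)) \<le> f (y, z)" if "z \<in> X" "y \<in> X" for z y
  proof -
    have "i (f (z, y)) = i (f (z, y)) \<sqinter> Sup ((\<lambda>x. f (x, z)) ` X)" using colsum[OF that(1)] by simp
    also have "\<dots> = Sup ((\<lambda>x. i (f (z, y)) \<sqinter> f (x, z)) ` X)" by (simp add: fl image_image)
    also have "\<dots> \<le> f (y, z)"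
    proof (rule SUP_least)
      fix x assume x: "x \<in> X"
      show "i (f (z, y)) \<sqinter> f (x, z) \<le> f (y, z)"
      proof (cases "x = y")
        case False
        have "f (x, z) \<sqinter> i (f (z, y)) \<le> Sup ((\<lambda>z. f (x, z) \<sqinter> i (f (z, y))) ` X)"
          using that x by (auto intro: SUP_upper)
        then have "f (x, z) \<sqinter> i (f (z, y)) = bot" using B[OF x that(2)] False by (simp add: bot_unique)
        then show ?thesis by (simp add: inf_commute)
      qed auto
    qed
    finally show ?thesis .
  qed
  have anti: "i (f (x, y)) = f (y, x)" if "x \<in> X" "y \<in> X" for x y
    using that by (intro antisym le2 le1)
  have d1: "f (x, y1) \<sqinter> f (x, y2) = bot" if "x \<in> X" "y1 \<in> X" "y2 \<in> X" "y1 \<noteq> y2" for x y1 y2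
  proof -
    have "i (f (y1, x)) \<sqinter> f (x, y2) \<le> Sup ((\<lambda>z. i (f (y1, z)) \<sqinter> f (z, y2)) ` X)"
      using that by (auto intro: SUP_upper)
    then show ?thesis using A[of y1 y2] anti[of y1 x] that by (simp add: bot_unique)
  qed
  have d2: "f (x1, y) \<sqinter> f (x2, y) = bot" if "y \<in> X" "x1 \<in> X" "x2 \<in> X" "x1 \<noteq> x2" for y x1 x2
  proof -
    have "f (x1, y) \<sqinter> i (f (y, x2)) \<le> Sup ((\<lambda>z. f (x1, z) \<sqinter> i (f (z, x2))) ` X)"
      using that by (auto intro: SUP_upper)
    then show ?thesis using B[of x1 x2] anti[of y x2] that by (simp add: bot_unique)
  qed
  have "aut_group_morphism X w e i f"
    unfolding aut_group_morphism_def l_bijection_def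
  proof (intro conjI ballI impI)
    show "\<And>x. x \<in> X \<Longrightarrow> Sup ((\<lambda>y. f (x, y)) ` X) = top" by (rule rowsum)
    show "\<And>y. y \<in> X \<Longrightarrow> Sup ((\<lambda>x. f (x, y)) ` X) = top" by (rule colsum)
    show "\<And>x y1 y2. x \<in> X \<Longrightarrow> y1 \<in> X \<Longrightarrow> y2 \<in> X \<Longrightarrow> y1 \<noteq> y2 \<Longrightarrow> f (x, y1) \<sqinter> f (x, y2) = bot"
      by (rule d1)
    show "\<And>y x1 x2. y \<in> X \<Longrightarrow> x1 \<in> X \<Longrightarrow> x2 \<in> X \<Longrightarrow> x1 \<noteq> x2 \<Longrightarrow> f (x1, y) \<sqinter> f (x2, y) = bot"
      by (rule d2)
    show "\<And>x y. x \<in> X \<Longrightarrow> y \<in> X \<Longrightarrow> w (f (x, y)) = tsup ((\<lambda>z. tens (f (x, z)) (f (z, y))) ` X)"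
      by (rule wf)
    show "\<And>x y. x \<in> X \<Longrightarrow> y \<in> X \<Longrightarrow> e (f (x, y)) = (x = y)" by (rule ef)
    show "\<And>x y. x \<in> X \<Longrightarrow> y \<in> X \<Longrightarrow> i (f (x, y)) = f (y, x)" by (rule anti)
  qed
  then show ?thesis
    apply (intro exI[of _ f] conjI)
      apply assumption
     apply (intro ballI refl)
    apply (intro allI impI)
    apply (erule conjE)
    apply assumption
    done
qed

end
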